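(* Let $n$ be the number of worker nodes, let $q\ge n$ be an odd integer, $\theta = 2\pi/q$, and let $1\le k_A\le n$. Let $\mathbf{R}_\theta = \begin{bmatrix}\cos\theta & -\sin\theta\\ \sin\theta & \cos\theta\end{bmatrix}$. Let $\mathbf{G}^{rot}$ be the real $2k_A\times 2n$ matrix whose $(i,j)$-th $2\times 2$ block is $\mathbf{R}_\theta^{ji}$ for $i\in\{0,\dots,k_A-1\}$, $j\in\{0,\dots,n-1\}$. A matrix $\mathbf{A}\in\mathbb{R}^{t\times r}$ is split into $2k_A$ equal block-columns $\mathbf{A}_{\langle\alpha,\beta\rangle}$, $\alpha\in\{0,\dots,k_A-1\}$, $\beta\in\{0,1\}$ (ordered lexicographically), and worker $i$ stores $\hat{\mathbf{A}}_{\langle i,j\rangle}=\sum_{\alpha,\beta}\mathbf{G}^{rot}(2\alpha+\beta,2i+j)\mathbf{A}_{\langle\alpha,\beta\rangle}$ for $j\in\{0,1\}$ together with $\mathbf{x}\in\mathbb{R}^t$, and returns $\hat{\mathbf{A}}_{\langle i,j\rangle}^T\mathbf{x}$, $j=0,1$. Then the scheme has threshold $k_A$: for every set of distinct worker indices $i_0,\dots,i_{k_A-1}\in\{0,\dots,n-1\}$, the $2k_A\times 2k_A$ recovery matrix $\tilde{\mathbf{G}}^{rot}$ formed by the block-columns $i_0,\dots,i_{k_A-1}$ of $\mathbf{G}^{rot}$ (i.e. whose $(a,b)$ block is $\mathbf{R}_\theta^{i_b a}$) is nonsingular, so $\mathbf{A}^T\mathbf{x}$ can be recovered from the results of any $k_A$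 workers. Moreover, the worst-case condition number over all such choices satisfies $\max\kappa(\tilde{\mathbf{G}}^{rot}) \le O(q^{\,q-k_A+c_1})$ with $c_1=5.5$.
   Context: For a square matrix $\mathbf{M}$, $\kappa(\mathbf{M})=\|\mathbf{M}\|\|\mathbf{M}^{-1}\|$ with $\|\cdot\|$ the largest singular value. Recovery: for each coordinate position, the row vector $\mathbf{m}\in\mathbb{R}^{1\times 2k_A}$ of the corresponding entries of $\mathbf{A}_{\langle\alpha,\beta\rangle}^T\mathbf{x}$ and the row vector $\mathbf{c}$ of the corresponding received entries satisfy $\mathbf{m}\tilde{\mathbf{G}}^{rot}=\mathbf{c}$. A scheme has threshold $\tau$ if the master can decode from any $\tau$ completed workers. *)

theory Defs
  imports "Jordan_Normal_Form.Matrix" Complex_Main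
begin

definition vec_norm2 :: "real vec \<Rightarrow> real" where
  "vec_norm2 x = sqrt (\<Sum>i<dim_vec x. (x $ i)^2)"

definition spec_norm :: "real mat \<Rightarrow> real" where
  "spec_norm M = Sup {vec_norm2 (M *\<^sub>v x) | x. x \<in> carrier_vec (dim_col M) \<and> vec_norm2 x = 1}"

definition inv_mat :: "real mat \<Rightarrow> real mat" where
  "inv_mat M = (SOME B. B \<in> carrier_mat (dim_row M) (dim_row M) \<and> inverts_mat M B \<and> inverts_mat B M)"

definition cond_num :: "real mat \<Rightarrow> real" where
  "cond_num M = spec_norm M * spec_norm (inv_mat M)"

definition rot_mat :: "real \<Rightarrow> real mat" where
  "rot_mat \<theta> = mat 2 2 (\<lambda>(r,c). if r = 0 \<and> c = 0 then cos \<theta> else if r = 0 then - sin \<theta>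
                                   else if c = 0 then sin \<theta> else cos \<theta>)"

definition G_rot :: "real \<Rightarrow> nat \<Rightarrow> nat \<Rightarrow> real mat" where
  "G_rot \<theta> kA n = mat (2*kA) (2*n)
     (\<lambda>(r,c). (rot_mat \<theta> ^\<^sub>m ((c div 2) * (r div 2))) $$ (r mod 2, c mod 2))"

definition G_rec :: "real \<Rightarrow> nat \<Rightarrow> nat \<Rightarrow> (nat \<Rightarrow> nat) \<Rightarrow> real mat" where
  "G_rec \<theta> kA n idx = mat (2*kA) (2*kA)
     (\<lambda>(r,c). G_rot \<theta> kA n $$ (r, 2 * idx (c div 2) + c mod 2))"

end

theory Submission
  imports Defs "HOL-Computational_Algebra.Polynomial" "Jordan_Normal_Form.Determinant"
begin


lemma sin_cubic_lb:
  fixes x :: real assumes "0 \<le> x" "x \<le> 4/3"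
  shows "x / 2 \<le> sin x"
proof -
  have "\<bar>sin x - (\<Sum>m<3. sin_coeff m * x ^ m)\<bar> \<le> inverse (fact 3) * \<bar>x\<bar> ^ 3"
    by (rule Maclaurin_sin_bound)
  moreover have "(\<Sum>m<3. sin_coeff m * x ^ m) = x"
    by (simp add: sin_coeff_def numeral_3_eq_3)
  moreover have "inverse (fact 3) * \<bar>x\<bar> ^ 3 = x^3 / 6"
  proof -
    have "(fact 3 :: real) = 6" by (simp add: numeral_3_eq_3)
    moreover have "\<bar>x\<bar> ^ 3 = x ^ 3" using assms(1) by simp
    ultimately show ?thesis by (simp only: divide_inverse mult.commute)
  qed
  ultimately have 1: "\<bar>sin x - x\<bar> \<le> x^3 / 6" by (simp only:)
  have "x * x \<le> (4/3) * (4/3)" using assms by (intro mult_mono) auto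
  hence "x * (x * x) \<le> x * 2" using assms by (intro mult_left_mono) auto
  hence "x^3 \<le> 2 * x" by (simp add: power3_eq_cube mult.commute)
  with 1 show ?thesis by linarith
qed

lemma sin_frac_lb:
  fixes d q :: nat assumes "1 \<le> d" "d < q" "q \<noteq> 2"
  shows "1 / real q \<le> sin (pi * real d / real q)"
proof -
  have q2: "real q \<ge> 2" using assms by simp
  have q3: "real q \<ge> 3" using assms by simp
  define y where "y = pi * real d / real q"
  have y1: "pi / real q \<le> y" using assms q2 unfolding y_def
    by (simp add: divide_right_mono)
  have "real d \<le> real q - 1" using assms by simp
  hence "pi * real d \<le> pi * (real q - 1)" by simp
  hence y2: "y \<le> pi - pi / real q" unfolding y_def using q2
    by (simp add: field_simps)
  define y' where "y' = min y (pi - y)"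
  have "sin y' = sin y" unfolding y'_def by (simp add: min_def)
  have a: "pi / real q \<le> pi / 2" using q2 by (intro divide_left_mono) auto
  have "pi / real q \<le> y'" unfolding y'_def using y1 y2 by simp
  moreover have "y' \<le> pi / 2" unfolding y'_def by (auto simp: min_def)
  ultimately have "sin (pi / real q) \<le> sin y'"
  proof (intro sin_monotone_2pi_le)
    have "0 \<le> pi / real q" by simp
    thus "- (pi / 2) \<le> pi / real q" using pi_ge_zero by linarith
  qed
  moreover have "(pi / real q) / 2 \<le> sin (pi / real q)"
  proof (rule sin_cubic_lb)
    have "pi / real q \<le> pi / 3" using q3 by (intro divide_left_mono) auto
    thus "pi / real q \<le> 4/3" using pi_less_4 by linarith
  qed simp
  moreover have "1 / real q \<le> (pi / real q) / 2"
  proof -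
    have "2 / real q \<le> pi / real q" using pi_ge_two by (intro divide_right_mono) auto
    thus ?thesis by simp
  qed
  ultimately show ?thesis using \<open>sin y' = sin y\<close> unfolding y_def by linarith
qed


lemma cis_chord: "cmod (1 - cis z) = 2 * \<bar>sin (z/2)\<bar>"
proof -
  have c: "cos z = 1 - 2 * (sin (z/2))^2" using cos_double_sin[of "z/2"] by simp
  have s: "sin z = 2 * sin (z/2) * cos (z/2)" using sin_double[of "z/2"] by simp
  have e1: "(sin z)^2 = 4 * (sin (z/2))^2 * (1 - (sin (z/2))^2)"
    unfolding s by (simp add: power_mult_distrib cos_squared_eq)
  have e2: "(1 - cos z)^2 = 4 * (sin (z/2))^2 * (sin (z/2))^2"
    unfolding c by (simp add: power2_eq_square)
  have "(1 - cos z)^2 + (sin z)^2 = 4 * (sin (z/2))^2"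
    unfolding e1 e2 by (simp add: algebra_simps)
  also have "\<dots> = (2 * \<bar>sin (z/2)\<bar>)^2" by (simp add: power_mult_distrib)
  finally have e: "(1 - cos z)^2 + (sin z)^2 = (2 * \<bar>sin (z/2)\<bar>)^2" .
  have "cmod (1 - cis z) = sqrt ((1 - cos z)^2 + (sin z)^2)"
    by (simp add: cmod_def)
  also have "\<dots> = 2 * \<bar>sin (z/2)\<bar>" unfolding e real_sqrt_abs by simp
  finally show ?thesis .
qed

lemma root_chord_lt:
  fixes q s t :: nat assumes "q \<noteq> 2" "s < t" "t < q"
  shows "2 / real q \<le> cmod (cis (2*pi/real q) ^ s - cis (2*pi/real q) ^ t)"
proof -
  define d where "d = t - s"
  have d: "1 \<le> d" "d < q" using assms unfolding d_def by auto
  have "cis (2*pi/real q) ^ t = cis (2*pi/real q) ^ s * cis (2*pi/real q) ^ d"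
    unfolding d_def using assms by (simp add: power_add[symmetric])
  hence "cis (2*pi/real q) ^ s - cis (2*pi/real q) ^ t = cis (2*pi/real q) ^ s * (1 - cis (2*pi/real q) ^ d)"
    by (simp add: algebra_simps)
  hence "cmod (cis (2*pi/real q) ^ s - cis (2*pi/real q) ^ t) = cmod (1 - cis (real d * (2*pi/real q)))"
    by (simp add: norm_mult norm_power DeMoivre)
  also have "\<dots> = 2 * \<bar>sin (pi * real d / real q)\<bar>"
    unfolding cis_chord by (simp add: mult_ac)
  also have "\<dots> \<ge> 2 * (1 / real q)"
    using sin_frac_lb[OF d assms(1)] by simp
  finally show ?thesis by simp
qed

lemma root_chord:
  fixes q s t :: nat assumes "q \<noteq> 2" "s < q" "t < q" "s \<noteq> t"
  shows "2 / real q \<le> cmod (cis (2*pi/real q) ^ s - cis (2*pi/real q) ^ t)"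
proof (cases "s < t")
  case True thus ?thesis using root_chord_lt assms by auto
next
  case False
  hence "t < s" using assms by auto
  thus ?thesis using root_chord_lt[of q t s] assms by (simp add: norm_minus_commute)
qed


definition om :: "nat \<Rightarrow> complex" where "om q = cis (2*pi/real q)"

lemma norm_om_pow [simp]: "cmod (om q ^ t) = 1"
  by (simp add: om_def norm_power)

lemma norm_om [simp]: "cmod (om q) = 1"
  by (simp add: om_def)

lemma om_pow_q: assumes "q \<ge> 1" shows "om q ^ q = 1"
  using assms by (simp add: om_def DeMoivre)

lemma om_inj: assumes "q \<noteq> 2" "s < q" "t < q" "om q ^ s = om q ^ t" shows "s = t"
proof (rule ccontr)
  assume "s \<noteq> t"
  from root_chord[OF assms(1-3) this] have "2 / real q \<le> cmod (om q ^ s - om q ^ t)"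
    by (simp add: om_def)
  moreover have "2 / real q > 0" using assms by simp
  ultimately show False using assms(4) by simp
qed

lemma om_chord: assumes "q \<noteq> 2" "s < q" "t < q" "s \<noteq> t"
  shows "2 / real q \<le> cmod (om q ^ s - om q ^ t)"
  using root_chord[OF assms] by (simp add: om_def)

lemma cnj_mult_self_pow: "cnj (om q) ^ a * om q ^ a = 1"
proof -
  have "cnj (om q) * om q = 1" by (simp add: om_def cis_cnj cis_mult)
  hence "(cnj (om q) * om q) ^ a = 1" by simp
  thus ?thesis by (simp add: power_mult_distrib)
qed

lemma root_sum:
  assumes "q \<noteq> 2" "q \<ge> 1" "j < q" "a < q"
  shows "(\<Sum>t<q. (om q ^ j * cnj (om q) ^ a) ^ t) = (if j = a then of_nat q else 0)"
proof (cases "j = a")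
  case True
  hence "om q ^ j * cnj (om q) ^ a = 1" using cnj_mult_self_pow[of q a] by (simp add: mult.commute)
  thus ?thesis using True by simp
next
  case False
  define y where "y = om q ^ j * cnj (om q) ^ a"
  have "y ^ q = (om q ^ q) ^ j * (cnj (om q ^ q)) ^ a"
    unfolding y_def by (simp add: power_mult_distrib power_mult[symmetric] mult.commute)
  hence yq: "y ^ q = 1" using om_pow_q[OF assms(2)] by simp
  have "y \<noteq> 1"
  proof
    assume "y = 1"
    hence "om q ^ j = om q ^ j * (cnj (om q) ^ a * om q ^ a)" using cnj_mult_self_pow[of q a] by simp
    also have "\<dots> = y * om q ^ a" unfolding y_def by (simp add: mult_ac)
    finally have "om q ^ j = om q ^ a" using \<open>y = 1\<close> by simp
    thus False using om_inj[OF assms(1,3,4)] False by simp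
  qed
  hence "(\<Sum>t<q. y ^ t) = 0" using yq by (simp add: geometric_sum)
  thus ?thesis using False unfolding y_def by simp
qed

lemma coeff_dft:
  fixes p :: "complex poly"
  assumes "q \<noteq> 2" "q \<ge> 1" "degree p < q" "a < q"
  shows "of_nat q * coeff p a = (\<Sum>t<q. poly p (om q ^ t) * cnj (om q) ^ (t * a))"
proof -
  have pe: "poly p z = (\<Sum>j<q. coeff p j * z ^ j)" for z
  proof -
    have "poly p z = (\<Sum>j\<le>degree p. coeff p j * z ^ j)" by (rule poly_altdef)
    also have "\<dots> = (\<Sum>j<q. coeff p j * z ^ j)"
    proof (rule sum.mono_neutral_left)
      show "\<forall>i\<in>{..<q} - {..degree p}. coeff p i * z ^ i = 0" by (auto simp: coeff_eq_0)
    qed (use assms in auto)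
    finally show ?thesis .
  qed
  have "(\<Sum>t<q. poly p (om q ^ t) * cnj (om q) ^ (t * a))
      = (\<Sum>t<q. \<Sum>j<q. coeff p j * (om q ^ j * cnj (om q) ^ a) ^ t)"
    unfolding pe by (simp add: sum_distrib_left sum_distrib_right power_mult_distrib power_mult[symmetric] mult_ac)
  also have "\<dots> = (\<Sum>j<q. coeff p j * (\<Sum>t<q. (om q ^ j * cnj (om q) ^ a) ^ t))"
    by (subst sum.swap) (simp add: sum_distrib_left)
  also have "\<dots> = (\<Sum>j<q. coeff p j * (if j = a then of_nat q else 0))"
    using root_sum[OF assms(1,2) _ assms(4)] by simp
  also have "\<dots> = coeff p a * of_nat q" using assms(4) by (simp add: if_distrib cong: if_cong)
  finally show ?thesis by simp
qed


definition Pb :: "nat \<Rightarrow> (nat \<Rightarrow> nat) \<Rightarrow> nat \<Rightarrow> nat \<Rightarrow> complex poly" where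
  "Pb q idx k b = (\<Prod>j\<in>{..<k}-{b}. [:- (om q ^ idx j), 1:])"
definition Lb :: "nat \<Rightarrow> (nat \<Rightarrow> nat) \<Rightarrow> nat \<Rightarrow> nat \<Rightarrow> complex poly" where
  "Lb q idx k b = smult (1 / poly (Pb q idx k b) (om q ^ idx b)) (Pb q idx k b)"
definition Uset :: "nat \<Rightarrow> (nat \<Rightarrow> nat) \<Rightarrow> nat \<Rightarrow> nat set" where
  "Uset q idx k = {..<q} - idx ` {..<k}"
definition Qp :: "nat \<Rightarrow> (nat \<Rightarrow> nat) \<Rightarrow> nat \<Rightarrow> complex poly" where
  "Qp q idx k = (\<Prod>t\<in>Uset q idx k. [:- (om q ^ t), 1:])"
definition hp :: "nat \<Rightarrow> complex \<Rightarrow> complex poly" where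
  "hp q c = (\<Sum>j<q. monom (cnj c ^ j) j)"

lemma pderiv_sum': "pderiv (sum f A) = (\<Sum>x\<in>A. pderiv (f x))"
  by (induction A rule: infinite_finite_induct) (simp_all add: pderiv_add)

context
  fixes q k :: nat and idx :: "nat \<Rightarrow> nat"
  assumes q2: "q \<noteq> 2" and k1: "1 \<le> k" and kq: "k \<le> q" and inj: "inj_on idx {..<k}"
    and idxq: "\<forall>b<k. idx b < q"
begin

lemma q1: "q \<ge> 1" using k1 kq by simp

lemma xn_ne: assumes "b < k" "j < k" "j \<noteq> b" shows "om q ^ idx b - om q ^ idx j \<noteq> 0"
proof
  assume "om q ^ idx b - om q ^ idx j = 0"
  hence "idx b = idx j" using om_inj[OF q2] idxq assms by simp
  thus False using inj assms by (auto dest: inj_onD)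
qed

lemma poly_Pb: "poly (Pb q idx k b) z = (\<Prod>j\<in>{..<k}-{b}. z - om q ^ idx j)"
  unfolding Pb_def poly_prod by simp

lemma Pb_nz: assumes "b < k" shows "poly (Pb q idx k b) (om q ^ idx b) \<noteq> 0"
  unfolding poly_Pb using xn_ne assms by (simp add: prod_zero_iff)

lemma Lb_eval: assumes "b < k" "b' < k"
  shows "poly (Lb q idx k b) (om q ^ idx b') = (if b' = b then 1 else 0)"
proof (cases "b' = b")
  case True thus ?thesis using Pb_nz[OF assms(1)] by (simp add: Lb_def)
next
  case False
  hence "poly (Pb q idx k b) (om q ^ idx b') = 0" unfolding poly_Pb using assms
    by (subst prod_zero_iff) auto
  thus ?thesis using False by (simp add: Lb_def)
qed

lemma degree_Lb: assumes "b < k" shows "degree (Lb q idx k b) \<le> k - 1"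
proof -
  have "degree (Pb q idx k b) \<le> sum (degree \<circ> (\<lambda>j. [:- (om q ^ idx j), 1:])) ({..<k}-{b})"
    unfolding Pb_def by (rule degree_prod_sum_le) simp
  also have "\<dots> = card ({..<k}-{b})" by simp
  also have "\<dots> = k - 1" using assms by simp
  finally show ?thesis unfolding Lb_def using degree_smult_le order.trans by blast
qed

lemma card_U: "card (Uset q idx k) = q - k"
proof -
  have "idx ` {..<k} \<subseteq> {..<q}" using idxq by auto
  moreover have "card (idx ` {..<k}) = k" using card_image[OF inj] by simp
  ultimately show ?thesis unfolding Uset_def by (simp add: card_Diff_subset)
qed

lemma finite_U [simp]: "finite (Uset q idx k)" unfolding Uset_def by simp

lemma degree_Qp: "degree (Qp q idx k) \<le> q - k"
proof -
  have "degree (Qp q idx k) \<le> sum (degree \<circ> (\<lambda>t. [:- (om q ^ t), 1:])) (Uset q idx k)"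
    unfolding Qp_def by (rule degree_prod_sum_le) simp
  also have "\<dots> = q - k" using card_U by simp
  finally show ?thesis .
qed

lemma poly_Qp: "poly (Qp q idx k) z = (\<Prod>t\<in>Uset q idx k. z - om q ^ t)"
  unfolding Qp_def poly_prod by simp

lemma poly_hp: assumes "s < q" "t < q"
  shows "poly (hp q (om q ^ s)) (om q ^ t) = (if t = s then of_nat q else 0)"
proof -
  have "poly (hp q (om q ^ s)) (om q ^ t) = (\<Sum>j<q. (om q ^ t * cnj (om q) ^ s) ^ j)"
    unfolding hp_def poly_sum poly_monom by (simp add: power_mult_distrib mult_ac)
  also have "\<dots> = (if t = s then of_nat q else 0)" by (rule root_sum[OF q2 q1 assms(2,1)])
  finally show ?thesis .
qed

lemma degree_hp: "degree (hp q c) \<le> q - 1"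
  unfolding hp_def by (rule degree_sum_le) (auto intro: order.trans[OF degree_monom_le])

lemma key_identity: assumes b: "b < k"
  shows "smult (of_nat q) (Lb q idx k b * Qp q idx k)
       = smult (poly (Qp q idx k) (om q ^ idx b)) (hp q (om q ^ idx b))"
proof -
  define D where "D = smult (of_nat q) (Lb q idx k b * Qp q idx k)
       - smult (poly (Qp q idx k) (om q ^ idx b)) (hp q (om q ^ idx b))"
  have ib: "idx b < q" using idxq b by simp
  have roots: "poly D (om q ^ t) = 0" if t: "t < q" for t
  proof (cases "t \<in> idx ` {..<k}")
    case True
    then obtain b' where b': "b' < k" "t = idx b'" by auto
    show ?thesis
    proof (cases "b' = b")
      case True thus ?thesis using b' b poly_hp[OF ib ib] unfolding D_def
        by (simp add: Lb_eval)
    next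
      case False
      hence "t \<noteq> idx b" using b' b inj by (auto dest: inj_onD)
      thus ?thesis using b' b poly_hp[OF ib t] False unfolding D_def
        by (simp add: Lb_eval)
    qed
  next
    case False
    hence tU: "t \<in> Uset q idx k" using t unfolding Uset_def by simp
    have "poly (Qp q idx k) (om q ^ t) = 0" unfolding poly_Qp using tU
      by (subst prod_zero_iff) auto
    moreover have "t \<noteq> idx b" using False b by auto
    ultimately show ?thesis using poly_hp[OF ib t] unfolding D_def by simp
  qed
  have degD: "degree D \<le> q - 1"
  proof -
    have "degree (Lb q idx k b * Qp q idx k) \<le> (k - 1) + (q - k)"
      using degree_mult_le[of "Lb q idx k b" "Qp q idx k"] degree_Lb[OF b] degree_Qp by linarith
    also have "\<dots> = q - 1" using k1 kq by simp
    finally have 1: "degree (smult (of_nat q) (Lb q idx k b * Qp q idx k)) \<le> q - 1"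
      using degree_smult_le order.trans by blast
    have 2: "degree (smult (poly (Qp q idx k) (om q ^ idx b)) (hp q (om q ^ idx b))) \<le> q - 1"
      using degree_smult_le degree_hp order.trans by blast
    show ?thesis unfolding D_def using degree_diff_le[OF 1 2] .
  qed
  have "D = 0"
  proof (rule ccontr)
    assume nz: "D \<noteq> 0"
    have sub: "(\<lambda>t. om q ^ t) ` {..<q} \<subseteq> {x. poly D x = 0}" using roots by auto
    have "inj_on (\<lambda>t. om q ^ t) {..<q}" by (rule inj_onI) (use om_inj[OF q2] in auto)
    hence "card ((\<lambda>t. om q ^ t) ` {..<q}) = q" by (simp add: card_image)
    hence "q \<le> card {x. poly D x = 0}"
      using card_mono[OF poly_roots_finite[OF nz] sub] by simp
    also have "\<dots> \<le> degree D" by (rule card_poly_roots_bound[OF nz])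
    finally show False using degD q1 by simp
  qed
  thus ?thesis unfolding D_def by simp
qed

lemma Lb_U_bound: assumes b: "b < k" and tU: "t \<in> Uset q idx k"
  shows "cmod (poly (Lb q idx k b) (om q ^ t)) \<le> 2 * real q ^ (q - k)"
proof -
  define M where "M = q - k"
  define u where "u = om q ^ t"
  define xb where "xb = om q ^ idx b"
  let ?L = "Lb q idx k b" and ?Q = "Qp q idx k" and ?h = "hp q xb"
  have ib: "idx b < q" using idxq b by simp
  have t: "t < q" using tU unfolding Uset_def by simp
  have M1: "M \<ge> 1" using card_U tU unfolding M_def
    by (metis One_nat_def Suc_leI card_gt_0_iff empty_iff finite_U)
  have Qu: "poly ?Q u = 0" unfolding poly_Qp u_def using tU by (subst prod_zero_iff) auto
  have "pderiv (smult (of_nat q) (?L * ?Q)) = pderiv (smult (poly ?Q xb) ?h)"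
    using key_identity[OF b] unfolding xb_def by simp
  hence "poly (pderiv (smult (of_nat q) (?L * ?Q))) u = poly (pderiv (smult (poly ?Q xb) ?h)) u"
    by simp
  hence eq: "of_nat q * (poly ?L u * poly (pderiv ?Q) u) = poly ?Q xb * poly (pderiv ?h) u"
    by (simp add: pderiv_smult pderiv_mult Qu)
  have dQ: "poly (pderiv ?Q) u = (\<Prod>a\<in>Uset q idx k - {t}. u - om q ^ a)"
  proof -
    have "poly (pderiv ?Q) u = (\<Sum>a\<in>Uset q idx k. \<Prod>a'\<in>Uset q idx k - {a}. u - om q ^ a')"
      unfolding Qp_def pderiv_prod poly_sum by (simp add: poly_prod pderiv_pCons)
    also have "\<dots> = (\<Prod>a'\<in>Uset q idx k - {t}. u - om q ^ a')"
    proof (rule sum.remove[OF finite_U tU, THEN trans])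
      have "(\<Prod>a'\<in>Uset q idx k - {a}. u - om q ^ a') = 0" if "a \<in> Uset q idx k - {t}" for a
        using that tU unfolding u_def by (subst prod_zero_iff) auto
      hence "(\<Sum>a\<in>Uset q idx k - {t}. \<Prod>a'\<in>Uset q idx k - {a}. u - om q ^ a') = 0"
        by (intro sum.neutral) blast
      thus "(\<Prod>a'\<in>Uset q idx k - {t}. u - om q ^ a') +
        (\<Sum>a\<in>Uset q idx k - {t}. \<Prod>a'\<in>Uset q idx k - {a}. u - om q ^ a') =
        (\<Prod>a'\<in>Uset q idx k - {t}. u - om q ^ a')" by simp
    qed
    finally show ?thesis .
  qed
  have dQb: "(2 / real q) ^ (M - 1) \<le> cmod (poly (pderiv ?Q) u)"
  proof -
    have "(2 / real q) ^ (M - 1) = (\<Prod>a\<in>Uset q idx k - {t}. 2 / real q)"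
      using card_U tU unfolding M_def by simp
    also have "\<dots> \<le> (\<Prod>a\<in>Uset q idx k - {t}. cmod (u - om q ^ a))"
    proof (rule prod_mono)
      fix a assume a: "a \<in> Uset q idx k - {t}"
      hence "a < q" "a \<noteq> t" unfolding Uset_def by auto
      thus "0 \<le> 2 / real q \<and> 2 / real q \<le> cmod (u - om q ^ a)"
        unfolding u_def using om_chord[OF q2 t] by simp
    qed
    also have "\<dots> = cmod (poly (pderiv ?Q) u)" unfolding dQ by (simp add: prod_norm)
    finally show ?thesis .
  qed
  have Qb: "cmod (poly ?Q xb) \<le> 2 ^ M"
  proof -
    have "cmod (poly ?Q xb) = (\<Prod>a\<in>Uset q idx k. cmod (xb - om q ^ a))"
      unfolding poly_Qp by (simp add: prod_norm)
    also have "\<dots> \<le> (\<Prod>a\<in>Uset q idx k. 2)"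
    proof (rule prod_mono)
      fix a
      have "cmod (xb - om q ^ a) \<le> cmod xb + cmod (om q ^ a)" by (rule norm_triangle_ineq4)
      thus "0 \<le> cmod (xb - om q ^ a) \<and> cmod (xb - om q ^ a) \<le> 2" unfolding xb_def by simp
    qed
    also have "\<dots> = 2 ^ M" using card_U unfolding M_def by simp
    finally show ?thesis .
  qed
  have hb: "cmod (poly (pderiv ?h) u) \<le> real q * real q"
  proof -
    have "poly (pderiv ?h) u = (\<Sum>j<q. of_nat j * cnj xb ^ j * u ^ (j - 1))"
      unfolding hp_def pderiv_sum' poly_sum pderiv_monom poly_monom by simp
    hence "cmod (poly (pderiv ?h) u) \<le> (\<Sum>j<q. cmod (of_nat j * cnj xb ^ j * u ^ (j - 1)))"
      by (simp add: norm_sum)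
    also have "\<dots> \<le> (\<Sum>j<q. real q)"
    proof (rule sum_mono)
      fix j assume "j \<in> {..<q}"
      hence "real j \<le> real q" by simp
      thus "cmod (of_nat j * cnj xb ^ j * u ^ (j - 1)) \<le> real q"
        unfolding xb_def u_def by (simp add: norm_mult norm_power)
    qed
    also have "\<dots> = real q * real q" by simp
    finally show ?thesis .
  qed
  define Lu where "Lu = cmod (poly ?L u)"
  define P where "P = cmod (poly (pderiv ?Q) u)"
  have Lu0: "Lu \<ge> 0" unfolding Lu_def by simp
  have q0: "real q > 0" using q1 by simp
  have "real q * (Lu * P) = cmod (poly ?Q xb) * cmod (poly (pderiv ?h) u)"
    using arg_cong[OF eq, of cmod] unfolding Lu_def P_def by (simp add: norm_mult)
  also have "\<dots> \<le> 2 ^ M * (real q * real q)"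
    using Qb hb by (intro mult_mono) auto
  finally have 1: "real q * (Lu * P) \<le> 2 ^ M * (real q * real q)" .
  have "real q * (Lu * (2 / real q) ^ (M - 1)) \<le> real q * (Lu * P)"
    using dQb Lu0 q0 unfolding P_def by (intro mult_left_mono) auto
  with 1 have 2: "Lu * (2 / real q) ^ (M - 1) \<le> 2 ^ M * real q"
    using q0 by (simp add: mult_le_cancel_left_pos)
  obtain M' where M': "M = Suc M'" using M1 by (cases M) auto
  have "Lu * 2 ^ M' \<le> 2 ^ M * real q * real q ^ M'"
  proof -
    have "Lu * (2 / real q) ^ M' * real q ^ M' \<le> 2 ^ M * real q * real q ^ M'"
      using 2 M' by (intro mult_right_mono) auto
    moreover have "(2 / real q) ^ M' * real q ^ M' = 2 ^ M'"
      using q0 by (simp add: power_divide)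
    ultimately show ?thesis by (simp add: mult.assoc)
  qed
  hence "Lu * 2 ^ M' \<le> (2 * real q ^ M) * 2 ^ M'" using M' by (simp add: mult_ac)
  hence "Lu \<le> 2 * real q ^ M" by simp
  thus ?thesis unfolding Lu_def u_def M_def .
qed

lemma Lb_root_bound: assumes b: "b < k" and t: "t < q"
  shows "cmod (poly (Lb q idx k b) (om q ^ t)) \<le> 2 * real q ^ (q - k)"
proof (cases "t \<in> idx ` {..<k}")
  case True
  then obtain b' where b': "b' < k" "t = idx b'" by auto
  have "1 \<le> real q ^ (q - k)" using q1 by simp
  thus ?thesis using Lb_eval[OF b b'(1)] b' by auto
next
  case False
  hence "t \<in> Uset q idx k" using t unfolding Uset_def by simp
  thus ?thesis by (rule Lb_U_bound[OF b])
qed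

lemma coeff_Lb_bound: assumes b: "b < k" and a: "a < q"
  shows "cmod (coeff (Lb q idx k b) a) \<le> 2 * real q ^ (q - k)"
proof -
  have deg: "degree (Lb q idx k b) < q" using degree_Lb[OF b] k1 kq by linarith
  have "real q * cmod (coeff (Lb q idx k b) a) = cmod (of_nat q * coeff (Lb q idx k b) a)"
    by (simp add: norm_mult)
  also have "\<dots> = cmod (\<Sum>t<q. poly (Lb q idx k b) (om q ^ t) * cnj (om q) ^ (t * a))"
    by (simp only: coeff_dft[OF q2 q1 deg a])
  also have "\<dots> \<le> (\<Sum>t<q. cmod (poly (Lb q idx k b) (om q ^ t) * cnj (om q) ^ (t * a)))"
    by (rule norm_sum)
  also have "\<dots> \<le> (\<Sum>t<q. 2 * real q ^ (q - k))"
  proof (rule sum_mono)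
    fix t assume "t \<in> {..<q}"
    thus "cmod (poly (Lb q idx k b) (om q ^ t) * cnj (om q) ^ (t * a)) \<le> 2 * real q ^ (q - k)"
      using Lb_root_bound[OF b] by (simp add: norm_mult norm_power)
  qed
  also have "\<dots> = real q * (2 * real q ^ (q - k))" by simp
  finally show ?thesis using q1 by (simp add: mult_le_cancel_left_pos)
qed

end



definition cmE :: "complex \<Rightarrow> nat \<Rightarrow> nat \<Rightarrow> real" where
  "cmE w i j = (if i = 0 \<and> j = 0 then Re w else if i = 0 then - Im w else if j = 0 then Im w else Re w)"

definition blk :: "nat \<Rightarrow> (nat \<Rightarrow> nat \<Rightarrow> complex) \<Rightarrow> real mat" where
  "blk k f = mat (2*k) (2*k) (\<lambda>(r,c). cmE (f (r div 2) (c div 2)) (r mod 2) (c mod 2))"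

lemma less2_cases: "(i::nat) < 2 \<Longrightarrow> i = 0 \<or> i = 1" by auto

lemma cmE_mult: assumes "i < 2" "j < 2"
  shows "cmE a i 0 * cmE b 0 j + cmE a i 1 * cmE b 1 j = cmE (a*b) i j"
  using less2_cases[OF assms(1)] less2_cases[OF assms(2)]
  by (auto simp: cmE_def algebra_simps)

lemma cmE_sum: "cmE (sum f A) i j = (\<Sum>a\<in>A. cmE (f a) i j)"
  by (simp add: cmE_def Re_sum Im_sum sum_negf)

lemma cmE_bound: "\<bar>cmE w i j\<bar> \<le> cmod w"
  by (simp add: cmE_def abs_Re_le_cmod abs_Im_le_cmod)

lemma sum_2k: "(\<Sum>s<2*k. F s) = (\<Sum>l<k. F (2*l) + F (2*l+1))" for F :: "nat \<Rightarrow> 'a::comm_monoid_add" and k :: nat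
  by (induction k) (simp_all add: add.assoc)

lemma sum_2: "(\<Sum>s<2. F s) = F 0 + F (1::nat)"
  by (simp add: numeral_2_eq_2)

lemma blk_carrier [simp]: "blk k f \<in> carrier_mat (2*k) (2*k)"
  unfolding blk_def by simp

lemma blk_dims [simp]: "dim_row (blk k f) = 2*k" "dim_col (blk k f) = 2*k"
  unfolding blk_def by simp_all

lemma blk_index: "r < 2*k \<Longrightarrow> c < 2*k \<Longrightarrow> blk k f $$ (r,c) = cmE (f (r div 2) (c div 2)) (r mod 2) (c mod 2)"
  unfolding blk_def by simp

lemma blk_mult: "blk k f * blk k g = blk k (\<lambda>i j. \<Sum>l<k. f i l * g l j)"
proof (rule eq_matI)
  fix r c assume r: "r < dim_row (blk k (\<lambda>i j. \<Sum>l<k. f i l * g l j))"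
    and c: "c < dim_col (blk k (\<lambda>i j. \<Sum>l<k. f i l * g l j))"
  hence r': "r < 2*k" and c': "c < 2*k" by simp_all
  have "(blk k f * blk k g) $$ (r,c) = (\<Sum>s<2*k. blk k f $$ (r,s) * blk k g $$ (s,c))"
    using r' c' by (simp add: scalar_prod_def atLeast0LessThan)
  also have "\<dots> = (\<Sum>l<k. blk k f $$ (r,2*l) * blk k g $$ (2*l,c) + blk k f $$ (r,2*l+1) * blk k g $$ (2*l+1,c))"
    by (rule sum_2k)
  also have "\<dots> = (\<Sum>l<k. cmE (f (r div 2) l * g l (c div 2)) (r mod 2) (c mod 2))"
  proof (rule sum.cong[OF refl])
    fix l assume "l \<in> {..<k}"
    hence l: "2*l < 2*k" "2*l+1 < 2*k" by auto
    show "blk k f $$ (r,2*l) * blk k g $$ (2*l,c) + blk k f $$ (r,2*l+1) * blk k g $$ (2*l+1,c)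
        = cmE (f (r div 2) l * g l (c div 2)) (r mod 2) (c mod 2)"
      using cmE_mult[of "r mod 2" "c mod 2" "f (r div 2) l" "g l (c div 2)"] l r' c'
      by (simp add: blk_index)
  qed
  also have "\<dots> = blk k (\<lambda>i j. \<Sum>l<k. f i l * g l j) $$ (r,c)"
    using r' c' by (simp add: blk_index cmE_sum)
  finally show "(blk k f * blk k g) $$ (r,c) = blk k (\<lambda>i j. \<Sum>l<k. f i l * g l j) $$ (r,c)" .
qed simp_all

lemma blk_one: "blk k (\<lambda>i j. if i = j then 1 else 0) = 1\<^sub>m (2*k)"
proof (rule eq_matI)
  fix r c assume "r < dim_row (1\<^sub>m (2*k) :: real mat)" "c < dim_col (1\<^sub>m (2*k) :: real mat)"
  hence rc: "r < 2*k" "c < 2*k" by simp_all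
  have "r = c \<longleftrightarrow> r div 2 = c div 2 \<and> r mod 2 = c mod 2"
    by (metis div_mult_mod_eq)
  moreover have "r mod 2 < 2" "c mod 2 < 2" by simp_all
  ultimately show "blk k (\<lambda>i j. if i = j then 1 else 0) $$ (r,c) = 1\<^sub>m (2*k) $$ (r,c)"
    using rc less2_cases[of "r mod 2"] less2_cases[of "c mod 2"]
    by (auto simp: blk_index cmE_def)
qed simp_all

lemma rot_pow: "rot_mat \<theta> ^\<^sub>m m = mat 2 2 (\<lambda>(i,j). cmE (cis \<theta> ^ m) i j)"
proof (induction m)
  case 0
  show ?case
  proof (rule eq_matI)
    fix i j assume "i < dim_row (mat 2 2 (\<lambda>(i,j). cmE (cis \<theta> ^ 0) i j))"
      "j < dim_col (mat 2 2 (\<lambda>(i,j). cmE (cis \<theta> ^ 0) i j))"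
    hence "i < 2" "j < 2" by simp_all
    thus "(rot_mat \<theta> ^\<^sub>m 0) $$ (i,j) = mat 2 2 (\<lambda>(i,j). cmE (cis \<theta> ^ 0) i j) $$ (i,j)"
      using less2_cases[of i] less2_cases[of j] by (auto simp: rot_mat_def cmE_def)
  qed (simp_all add: rot_mat_def)
next
  case (Suc m)
  show ?case
  proof (rule eq_matI)
    fix i j assume "i < dim_row (mat 2 2 (\<lambda>(i,j). cmE (cis \<theta> ^ Suc m) i j))"
      "j < dim_col (mat 2 2 (\<lambda>(i,j). cmE (cis \<theta> ^ Suc m) i j))"
    hence ij: "i < 2" "j < 2" by simp_all
    have "(rot_mat \<theta> ^\<^sub>m Suc m) $$ (i,j) = (mat 2 2 (\<lambda>(i,j). cmE (cis \<theta> ^ m) i j) * rot_mat \<theta>) $$ (i,j)"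
      using Suc by simp
    also have "\<dots> = cmE (cis \<theta> ^ m) i 0 * cmE (cis \<theta>) 0 j + cmE (cis \<theta> ^ m) i 1 * cmE (cis \<theta>) 1 j"
      using ij less2_cases[of j] by (auto simp: rot_mat_def scalar_prod_def atLeast0LessThan sum_2 cmE_def)
    also have "\<dots> = cmE (cis \<theta> ^ m * cis \<theta>) i j" by (rule cmE_mult[OF ij])
    also have "\<dots> = cmE (cis \<theta> ^ Suc m) i j" by (simp only: power_Suc2)
    finally show "(rot_mat \<theta> ^\<^sub>m Suc m) $$ (i,j) = mat 2 2 (\<lambda>(i,j). cmE (cis \<theta> ^ Suc m) i j) $$ (i,j)"
      using ij by simp
  qed (simp_all add: rot_mat_def)
qed

lemma G_rec_blk: assumes "\<forall>b<kA. idx b < n"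
  shows "G_rec \<theta> kA n idx = blk kA (\<lambda>i j. cis \<theta> ^ (idx j * i))"
proof (rule eq_matI)
  fix r c assume "r < dim_row (blk kA (\<lambda>i j. cis \<theta> ^ (idx j * i)))"
    "c < dim_col (blk kA (\<lambda>i j. cis \<theta> ^ (idx j * i)))"
  hence rc: "r < 2*kA" "c < 2*kA" by simp_all
  hence "idx (c div 2) < n" using assms by auto
  hence col: "2 * idx (c div 2) + c mod 2 < 2 * n" by linarith
  have d: "(2 * idx (c div 2) + c mod 2) div 2 = idx (c div 2)" by simp
  have m: "(2 * idx (c div 2) + c mod 2) mod 2 = c mod 2" by simp
  show "G_rec \<theta> kA n idx $$ (r,c) = blk kA (\<lambda>i j. cis \<theta> ^ (idx j * i)) $$ (r,c)"
    using rc col unfolding G_rec_def G_rot_def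
    by (simp add: blk_index rot_pow d m del: div_mult_self1 mod_mult_self1)
qed (simp_all add: G_rec_def)


lemma blk_cong: assumes "\<And>i j. i < k \<Longrightarrow> j < k \<Longrightarrow> f i j = g i j" shows "blk k f = blk k g"
proof (rule eq_matI)
  fix r c assume "r < dim_row (blk k g)" "c < dim_col (blk k g)"
  hence rc: "r < 2*k" "c < 2*k" by simp_all
  hence "r div 2 < k" "c div 2 < k" by auto
  thus "blk k f $$ (r,c) = blk k g $$ (r,c)" using rc assms by (simp add: blk_index)
qed simp_all

lemma blk_entry_bound: assumes "\<And>i j. i < k \<Longrightarrow> j < k \<Longrightarrow> cmod (f i j) \<le> c"
  shows "\<forall>r<2*k. \<forall>s<2*k. \<bar>blk k f $$ (r,s)\<bar> \<le> c"
proof (intro allI impI)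
  fix r s assume rs: "r < 2*k" "s < 2*k"
  hence "r div 2 < k" "s div 2 < k" by auto
  hence "cmod (f (r div 2) (s div 2)) \<le> c" using assms by blast
  thus "\<bar>blk k f $$ (r,s)\<bar> \<le> c" using rs cmE_bound[of "f (r div 2) (s div 2)" "r mod 2" "s mod 2"]
    by (simp add: blk_index)
qed

lemma spec_norm_bound:
  fixes M :: "real mat"
  assumes M: "M \<in> carrier_mat nr nc" and nc: "0 < nc" and c: "0 \<le> c"
    and ent: "\<forall>i<nr. \<forall>j<nc. \<bar>M $$ (i,j)\<bar> \<le> c"
  shows "spec_norm M \<le> real nr * real nc * c \<and> 0 \<le> spec_norm M"
proof -
  define S where "S = {vec_norm2 (M *\<^sub>v x) | x. x \<in> carrier_vec (dim_col M) \<and> vec_norm2 x = 1}"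
  have dims: "dim_row M = nr" "dim_col M = nc" using M by auto
  have bnd: "0 \<le> y \<and> y \<le> real nr * real nc * c" if "y \<in> S" for y
  proof -
    have "\<exists>x. x \<in> carrier_vec (dim_col M) \<and> vec_norm2 x = 1 \<and> y = vec_norm2 (M *\<^sub>v x)"
      using that unfolding S_def by blast
    then obtain x where x: "x \<in> carrier_vec nc" "vec_norm2 x = 1" and y: "y = vec_norm2 (M *\<^sub>v x)"
      using dims by auto
    have dx: "dim_vec x = nc" using x by auto
    have s1: "(\<Sum>i<nc. (x $ i)^2) = 1" using x(2) dx unfolding vec_norm2_def by simp
    have xj: "\<bar>x $ j\<bar> \<le> 1" if "j < nc" for j
    proof -
      have "(x $ j)^2 \<le> (\<Sum>i<nc. (x $ i)^2)"
        by (rule member_le_sum) (use that in auto)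
      thus ?thesis using s1 by (simp add: abs_square_le_1)
    qed
    have yi: "((M *\<^sub>v x) $ i)^2 \<le> (real nc * c)^2" if i: "i < nr" for i
    proof -
      have "(M *\<^sub>v x) $ i = (\<Sum>j<nc. M $$ (i,j) * x $ j)"
        using i dims dx by (simp add: scalar_prod_def atLeast0LessThan)
      hence "\<bar>(M *\<^sub>v x) $ i\<bar> \<le> (\<Sum>j<nc. \<bar>M $$ (i,j) * x $ j\<bar>)"
        by (simp add: sum_abs)
      also have "\<dots> \<le> (\<Sum>j<nc. c)"
      proof (rule sum_mono)
        fix j assume "j \<in> {..<nc}"
        hence "\<bar>M $$ (i,j)\<bar> \<le> c" "\<bar>x $ j\<bar> \<le> 1" using ent i xj by auto
        hence "\<bar>M $$ (i,j)\<bar> * \<bar>x $ j\<bar> \<le> c * 1" using c by (intro mult_mono) auto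
        thus "\<bar>M $$ (i,j) * x $ j\<bar> \<le> c" by (simp add: abs_mult)
      qed
      also have "\<dots> = real nc * c" by simp
      finally have "\<bar>(M *\<^sub>v x) $ i\<bar> \<le> real nc * c" .
      hence "\<bar>(M *\<^sub>v x) $ i\<bar>^2 \<le> (real nc * c)^2" by (intro power_mono) auto
      thus ?thesis by simp
    qed
    have "(\<Sum>i<nr. ((M *\<^sub>v x) $ i)^2) \<le> (\<Sum>i<nr. (real nc * c)^2)"
      by (rule sum_mono) (use yi in auto)
    also have "\<dots> = real nr * (real nc * c)^2" by simp
    also have "\<dots> \<le> (real nr * real nc * c)^2"
    proof -
      have "real nr \<le> real nr ^ 2" by (cases nr) (auto simp: power2_eq_square)
      hence "real nr * (real nc * c)^2 \<le> real nr ^ 2 * (real nc * c)^2"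
        by (intro mult_right_mono) auto
      thus ?thesis by (simp add: power_mult_distrib)
    qed
    finally have "sqrt (\<Sum>i<nr. ((M *\<^sub>v x) $ i)^2) \<le> sqrt ((real nr * real nc * c)^2)"
      by (rule real_sqrt_le_mono)
    hence "y \<le> real nr * real nc * c" using y dims c unfolding vec_norm2_def by simp
    moreover have "0 \<le> y" using y unfolding vec_norm2_def by (simp add: sum_nonneg)
    ultimately show ?thesis by simp
  qed
  have ne: "S \<noteq> {}"
  proof -
    have "vec_norm2 (unit_vec nc 0) = 1"
    proof -
      have "(\<Sum>i<nc. ((unit_vec nc 0 :: real vec) $ i)^2) = (\<Sum>i<nc. if i = 0 then 1 else 0)"
        by (rule sum.cong) auto
      also have "\<dots> = 1" using nc by simp
      finally show ?thesis unfolding vec_norm2_def by simp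
    qed
    hence "vec_norm2 (M *\<^sub>v unit_vec nc 0) \<in> S" unfolding S_def using dims by auto
    thus ?thesis by auto
  qed
  have bdd: "bdd_above S" unfolding bdd_above_def using bnd by blast
  have "Sup S \<le> real nr * real nc * c" using ne bnd by (intro cSup_least) auto
  moreover have "0 \<le> Sup S"
  proof -
    obtain y where "y \<in> S" using ne by auto
    thus ?thesis using bnd[of y] cSup_upper[OF _ bdd, of y] by auto
  qed
  ultimately show ?thesis unfolding spec_norm_def S_def by simp
qed

lemma inv_from_left:
  fixes A B :: "real mat"
  assumes A: "A \<in> carrier_mat n n" and B: "B \<in> carrier_mat n n" and BA: "B * A = 1\<^sub>m n"
  shows "invertible_mat A \<and> inv_mat A = B"
proof -
  have AB: "A * B = 1\<^sub>m n" by (rule mat_mult_left_right_inverse[OF B A BA])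
  have dr: "dim_row A = n" "dim_row B = n" using A B by auto
  have P: "B \<in> carrier_mat (dim_row A) (dim_row A) \<and> inverts_mat A B \<and> inverts_mat B A"
    using AB BA B dr unfolding inverts_mat_def by simp
  have inv: "invertible_mat A" unfolding invertible_mat_def square_mat.simps
    using P A by auto
  define B' where "B' = inv_mat A"
  have P': "B' \<in> carrier_mat (dim_row A) (dim_row A) \<and> inverts_mat A B' \<and> inverts_mat B' A"
    unfolding B'_def inv_mat_def by (rule someI[of _ B], rule P)
  hence B'c: "B' \<in> carrier_mat n n" and B'A: "B' * A = 1\<^sub>m n"
    using dr unfolding inverts_mat_def by auto
  have "B' = B' * (A * B)" using B'c AB by simp
  also have "\<dots> = (B' * A) * B" using B'c A B by simp
  also have "\<dots> = B" using B'A B by simp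
  finally show ?thesis using inv unfolding B'_def by simp
qed


theorem theorem2:
  "\<exists>C>0. \<forall>(n::nat) (q::nat) (kA::nat) (idx::nat \<Rightarrow> nat).
     odd q \<and> n \<le> q \<and> 1 \<le> kA \<and> kA \<le> n \<and>
     inj_on idx {..<kA} \<and> (\<forall>b<kA. idx b < n) \<longrightarrow>
       invertible_mat (G_rec (2 * pi / real q) kA n idx) \<and>
       cond_num (G_rec (2 * pi / real q) kA n idx)
         \<le> C * real q powr (real q - real kA + 5.5)"
proof (intro exI[of _ 32] conjI allI impI)
  show "(32::real) > 0" by simp
  fix n q kA :: nat and idx :: "nat \<Rightarrow> nat"
  assume H: "odd q \<and> n \<le> q \<and> 1 \<le> kA \<and> kA \<le> n \<and> inj_on idx {..<kA} \<and> (\<forall>b<kA. idx b < n)"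
  have q2: "q \<noteq> 2" using H by auto
  have k1: "1 \<le> kA" and kq: "kA \<le> q" and inj: "inj_on idx {..<kA}" using H by auto
  have idxn: "\<forall>b<kA. idx b < n" using H by auto
  have idxq: "\<forall>b<kA. idx b < q" using H by force
  have q1: "real q \<ge> 1" using k1 kq by simp
  define G where "G = G_rec (2 * pi / real q) kA n idx"
  define B where "B = blk kA (\<lambda>i j. coeff (Lb q idx kA i) j)"
  have G: "G = blk kA (\<lambda>i j. (om q ^ idx j) ^ i)"
    unfolding G_def G_rec_blk[OF idxn] by (simp add: om_def power_mult)
  have "B * G = blk kA (\<lambda>i j. \<Sum>l<kA. coeff (Lb q idx kA i) l * (om q ^ idx j) ^ l)"
    unfolding B_def G by (rule blk_mult)
  also have "\<dots> = blk kA (\<lambda>i j. if i = j then 1 else 0)"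
  proof (rule blk_cong)
    fix i j assume ij: "i < kA" "j < kA"
    have deg: "degree (Lb q idx kA i) \<le> kA - 1" by (rule degree_Lb[OF q2 k1 kq inj idxq ij(1)])
    have "(\<Sum>l<kA. coeff (Lb q idx kA i) l * (om q ^ idx j) ^ l)
        = (\<Sum>l\<le>degree (Lb q idx kA i). coeff (Lb q idx kA i) l * (om q ^ idx j) ^ l)"
    proof (rule sum.mono_neutral_right)
      show "{..degree (Lb q idx kA i)} \<subseteq> {..<kA}" using deg k1 by auto
      show "\<forall>l\<in>{..<kA} - {..degree (Lb q idx kA i)}. coeff (Lb q idx kA i) l * (om q ^ idx j) ^ l = 0"
        by (auto simp: coeff_eq_0)
    qed simp
    also have "\<dots> = poly (Lb q idx kA i) (om q ^ idx j)" by (simp add: poly_altdef)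
    also have "\<dots> = (if j = i then 1 else 0)" by (rule Lb_eval[OF q2 k1 kq inj idxq ij])
    finally show "(\<Sum>l<kA. coeff (Lb q idx kA i) l * (om q ^ idx j) ^ l) = (if i = j then 1 else 0)"
      by auto
  qed
  also have "\<dots> = 1\<^sub>m (2*kA)" by (rule blk_one)
  finally have BG: "B * G = 1\<^sub>m (2*kA)" .
  have Gc: "G \<in> carrier_mat (2*kA) (2*kA)" unfolding G by simp
  have Bc: "B \<in> carrier_mat (2*kA) (2*kA)" unfolding B_def by simp
  from inv_from_left[OF Gc Bc BG] have inv: "invertible_mat G" and invG: "inv_mat G = B" by auto
  have nc: "0 < 2*kA" using k1 by simp
  have sG: "spec_norm G \<le> real (2*kA) * real (2*kA) * 1 \<and> 0 \<le> spec_norm G"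
  proof (rule spec_norm_bound[OF Gc nc])
    show "\<forall>i<2*kA. \<forall>j<2*kA. \<bar>G $$ (i,j)\<bar> \<le> 1" unfolding G
      by (rule blk_entry_bound) (simp add: norm_power)
  qed simp
  define W where "W = 2 * real q ^ (q - kA)"
  have W0: "0 \<le> W" unfolding W_def by simp
  have sB: "spec_norm B \<le> real (2*kA) * real (2*kA) * W \<and> 0 \<le> spec_norm B"
  proof (rule spec_norm_bound[OF Bc nc W0])
    show "\<forall>i<2*kA. \<forall>j<2*kA. \<bar>B $$ (i,j)\<bar> \<le> W" unfolding B_def
    proof (rule blk_entry_bound)
      fix i j assume ij: "i < kA" "j < kA"
      hence "j < q" using kq by simp
      thus "cmod (coeff (Lb q idx kA i) j) \<le> W" unfolding W_def
        by (rule coeff_Lb_bound[OF q2 k1 kq inj idxq ij(1)])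
    qed
  qed
  have "cond_num G = spec_norm G * spec_norm (inv_mat G)" by (simp add: cond_num_def)
  also have "\<dots> \<le> (real (2*kA) * real (2*kA) * 1) * (real (2*kA) * real (2*kA) * W)"
    unfolding invG using sG sB by (intro mult_mono) auto
  also have "\<dots> = 32 * (real kA ^ 4 * real q ^ (q - kA))" unfolding W_def
    by (simp add: power4_eq_xxxx)
  also have "\<dots> \<le> 32 * (real q ^ 4 * real q ^ (q - kA))"
    using kq by (intro mult_left_mono mult_right_mono power_mono) auto
  also have "\<dots> = 32 * real q powr (real q - real kA + 4)"
  proof -
    have "real q ^ 4 * real q ^ (q - kA) = real q ^ (q - kA + 4)" by (simp add: power_add)
    also have "\<dots> = real q powr (real (q - kA + 4))" using q1 by (subst powr_realpow) auto
    also have "real (q - kA + 4) = real q - real kA + 4" using kq by simp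
    finally show ?thesis by simp
  qed
  also have "\<dots> \<le> 32 * real q powr (real q - real kA + 5.5)"
    using q1 by (intro mult_left_mono powr_mono) auto
  finally show "cond_num (G_rec (2 * pi / real q) kA n idx) \<le> 32 * real q powr (real q - real kA + 5.5)"
    unfolding G_def .
  show "invertible_mat (G_rec (2 * pi / real q) kA n idx)" using inv unfolding G_def .
qed

end
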